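(* Let $K$ be a field of characteristic zero, $W_n$ the Witt Lie algebra and $\sigma\in\mathrm{Aut}_{\mathrm{Lie}}(W_n)$. Then for every $\alpha\in\mathbb{Z}^n$ (viewed as a column vector) one has $\sigma(x^\alpha\mathcal{H}_n)=x^{A_{\sigma^{-1}}\alpha}\mathcal{H}_n$; in particular $A_{\sigma^{-1}}\alpha\in\mathbb{Z}^n$.
   Context: $W_n=\mathrm{Der}_K(K[x_1^{\pm1},\ldots,x_n^{\pm1}])=\bigoplus_{\alpha\in\mathbb{Z}^n}x^\alpha\mathcal{H}_n$, $x^\alpha=x_1^{\alpha_1}\cdots x_n^{\alpha_n}$, $\mathcal{H}_n=\bigoplus_iKH_i$, $H_i=x_i\partial_i$. Every Lie automorphism $\tau$ of $W_n$ satisfies $\tau(\mathcal{H}_n)=\mathcal{H}_n$, so there is a unique matrix $A_\tau=(a_{ij})\in\mathrm{GL}_n(K)$ with $\tau(H_i)=\sum_j a_{ij}H_j$ for all $i$, i.e. $\tau(H)=A_\tau H$ with $H=(H_1,\ldots,H_n)^T$. *)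

theory Defs
  imports "HOL-Analysis.Analysis"
begin

text \<open>The Witt algebra W_n = Der(K[x_1^{+-1},...,x_n^{+-1}]) in the basis x^alpha H_i.
  An element is a finitely supported function  w :: int^'n => 'k^'n ;  w alpha $ i is the
  coefficient of x^alpha H_i, where H_i = x_i d_i.  The dimension n is CARD('n).\<close>

definition witt :: "(int^'n \<Rightarrow> 'k::field^'n) set" where
  "witt = {w. finite {\<alpha>. w \<alpha> \<noteq> 0}}"

definition kdot :: "'k::field^'n \<Rightarrow> int^'n \<Rightarrow> 'k" where
  "kdot a \<beta> = (\<Sum>i\<in>UNIV. a $ i * of_int (\<beta> $ i))"

text \<open>Lie bracket, extended bilinearly from
  [x^alpha (a.H), x^beta (b.H)] = x^(alpha+beta) ((a.beta) (b.H) - (b.alpha) (a.H)).\<close>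
definition witt_bracket ::
  "(int^'n \<Rightarrow> 'k::field^'n) \<Rightarrow> (int^'n \<Rightarrow> 'k^'n) \<Rightarrow> (int^'n \<Rightarrow> 'k^'n)" where
  "witt_bracket v w = (\<lambda>\<gamma>. \<Sum>\<alpha>\<in>{\<alpha>. v \<alpha> \<noteq> 0}.
      kdot (v \<alpha>) (\<gamma> - \<alpha>) *s w (\<gamma> - \<alpha>) - kdot (w (\<gamma> - \<alpha>)) \<alpha> *s v \<alpha>)"

definition witt_add :: "(int^'n \<Rightarrow> 'k::field^'n) \<Rightarrow> (int^'n \<Rightarrow> 'k^'n) \<Rightarrow> (int^'n \<Rightarrow> 'k^'n)" where
  "witt_add v w = (\<lambda>\<gamma>. v \<gamma> + w \<gamma>)"

definition witt_scale :: "'k::field \<Rightarrow> (int^'n \<Rightarrow> 'k^'n) \<Rightarrow> (int^'n \<Rightarrow> 'k^'n)" where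
  "witt_scale c w = (\<lambda>\<gamma>. c *s w \<gamma>)"

definition witt_lie_aut :: "((int^'n \<Rightarrow> 'k::field^'n) \<Rightarrow> (int^'n \<Rightarrow> 'k^'n)) \<Rightarrow> bool" where
  "witt_lie_aut \<sigma> \<longleftrightarrow> bij_betw \<sigma> witt witt \<and>
     (\<forall>v\<in>witt. \<forall>w\<in>witt. \<sigma> (witt_add v w) = witt_add (\<sigma> v) (\<sigma> w)) \<and>
     (\<forall>c. \<forall>w\<in>witt. \<sigma> (witt_scale c w) = witt_scale c (\<sigma> w)) \<and>
     (\<forall>v\<in>witt. \<forall>w\<in>witt. \<sigma> (witt_bracket v w) = witt_bracket (\<sigma> v) (\<sigma> w))"

definition Hel :: "'n \<Rightarrow> (int^'n \<Rightarrow> 'k::field^'n)" where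
  "Hel i = (\<lambda>\<gamma>. if \<gamma> = 0 then axis i 1 else 0)"

definition xH :: "int^'n \<Rightarrow> (int^'n \<Rightarrow> 'k::field^'n) set" where
  "xH \<alpha> = {w. \<forall>\<gamma>. \<gamma> \<noteq> \<alpha> \<longrightarrow> w \<gamma> = 0}"

text \<open>The matrix A_tau = (a_ij) with tau(H_i) = sum_j a_ij H_j.  Since every Lie automorphism
  maps H_n into H_n (standing fact), tau(H_i) is supported at 0 and a_ij is its j-th
  coefficient there.\<close>
definition Amat :: "((int^'n \<Rightarrow> 'k::field^'n) \<Rightarrow> (int^'n \<Rightarrow> 'k^'n)) \<Rightarrow> 'k^'n^'n" where
  "Amat \<tau> = (\<chi> i j. (\<tau> (Hel i) 0) $ j)"

definition int_vec :: "int^'n \<Rightarrow> 'k::field^'n" where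
  "int_vec \<alpha> = (\<chi> i. of_int (\<alpha> $ i))"

end

theory Submission
  imports Defs
begin

definition supp :: "(int^'n \<Rightarrow> 'k::field^'n) \<Rightarrow> (int^'n) set" where
  "supp w = {\<gamma>. w \<gamma> \<noteq> 0}"

lemma witt_supp: "w \<in> witt \<longleftrightarrow> finite (supp w)"
  by (simp add: witt_def supp_def)

lemma kdot_zero_left[simp]: "kdot 0 \<beta> = 0"
  by (simp add: kdot_def)
lemma kdot_zero_right[simp]: "kdot a 0 = 0"
  by (simp add: kdot_def)
lemma kdot_add_right: "kdot a (\<beta> + \<gamma>) = kdot a \<beta> + kdot a \<gamma>"
  by (simp add: kdot_def algebra_simps sum.distrib)
lemma kdot_diff_right: "kdot a (\<beta> - \<gamma>) = kdot a \<beta> - kdot a \<gamma>"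
  by (simp add: kdot_def algebra_simps sum_subtractf)
lemma kdot_scale_right: "kdot a (c *s \<beta>) = of_int c * kdot a \<beta>"
  by (simp add: kdot_def algebra_simps sum_distrib_left)
lemma kdot_scale_left: "kdot (c *s a) \<beta> = c * kdot a \<beta>"
  by (simp add: kdot_def algebra_simps sum_distrib_left)
lemma kdot_axis: "kdot (axis i 1) \<beta> = of_int (\<beta> $ i)"
proof -
  have "kdot (axis i 1) \<beta> = (\<Sum>j\<in>UNIV. if j = i then of_int (\<beta> $ j) else 0)"
    unfolding kdot_def by (intro sum.cong) (auto simp: axis_def)
  also have "\<dots> = of_int (\<beta> $ i)" by simp
  finally show ?thesis .
qed

lemma witt_add_in: "v \<in> witt \<Longrightarrow> w \<in> witt \<Longrightarrow> witt_add v w \<in> witt"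
proof -
  assume "v \<in> witt" "w \<in> witt"
  then have "finite (supp v \<union> supp w)" by (simp add: witt_supp)
  moreover have "supp (witt_add v w) \<subseteq> supp v \<union> supp w"
    by (auto simp: supp_def witt_add_def)
  ultimately show ?thesis by (meson finite_subset witt_supp)
qed

lemma witt_scale_in: "w \<in> witt \<Longrightarrow> witt_scale c w \<in> witt"
proof -
  assume "w \<in> witt"
  moreover have "supp (witt_scale c w) \<subseteq> supp w"
    by (auto simp: supp_def witt_scale_def)
  ultimately show ?thesis by (meson finite_subset witt_supp)
qed

lemma zero_in: "(\<lambda>\<gamma>. 0) \<in> witt"
  by (simp add: witt_def)

lemma witt_scale_zero: "witt_scale 0 w = (\<lambda>\<gamma>. 0)"
  by (simp add: witt_scale_def)

lemma bracket_supp: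
  assumes "v \<in> witt"
  shows "supp (witt_bracket v w) \<subseteq> (\<lambda>(a,b). a + b) ` (supp v \<times> supp w)"
proof
  fix \<gamma> assume g: "\<gamma> \<in> supp (witt_bracket v w)"
  show "\<gamma> \<in> (\<lambda>(a,b). a + b) ` (supp v \<times> supp w)"
  proof (rule ccontr)
    assume n: "\<gamma> \<notin> (\<lambda>(a,b). a + b) ` (supp v \<times> supp w)"
    have "\<And>\<alpha>. \<alpha> \<in> supp v \<Longrightarrow> w (\<gamma> - \<alpha>) = 0"
    proof -
      fix \<alpha> assume "\<alpha> \<in> supp v"
      with n have "\<gamma> - \<alpha> \<notin> supp w" by (auto simp: image_iff) (metis add.commute diff_add_cancel)
      then show "w (\<gamma> - \<alpha>) = 0" by (simp add: supp_def)
    qed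
    then have "witt_bracket v w \<gamma> = 0"
      unfolding witt_bracket_def supp_def[symmetric]
      by (intro sum.neutral) auto
    with g show False by (simp add: supp_def)
  qed
qed

lemma witt_bracket_in: "v \<in> witt \<Longrightarrow> w \<in> witt \<Longrightarrow> witt_bracket v w \<in> witt"
proof -
  assume a: "v \<in> witt" "w \<in> witt"
  then have "finite ((\<lambda>(a,b). a + b) ` (supp v \<times> supp w))"
    by (simp add: witt_supp)
  with bracket_supp[OF a(1), of w] show ?thesis
    by (meson finite_subset witt_supp)
qed


lemma aut_zero: assumes "witt_lie_aut \<sigma>" shows "\<sigma> (\<lambda>\<gamma>. 0) = (\<lambda>\<gamma>. 0)"
proof -
  have "\<sigma> (witt_scale 0 (\<lambda>\<gamma>. 0)) = witt_scale 0 (\<sigma> (\<lambda>\<gamma>. 0))"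
    using assms zero_in unfolding witt_lie_aut_def by blast
  then show ?thesis by (simp add: witt_scale_zero)
qed

lemma aut_in: "witt_lie_aut \<sigma> \<Longrightarrow> w \<in> witt \<Longrightarrow> \<sigma> w \<in> witt"
proof -
  assume a: "witt_lie_aut \<sigma>" "w \<in> witt"
  then have "bij_betw \<sigma> witt witt" unfolding witt_lie_aut_def by blast
  then show ?thesis using bij_betw_apply a(2) by metis
qed

lemma aut_inv:
  assumes "witt_lie_aut \<sigma>"
  shows "witt_lie_aut (inv_into witt \<sigma>)"
    and "\<And>x. x \<in> witt \<Longrightarrow> \<sigma> (inv_into witt \<sigma> x) = x"
    and "\<And>x. x \<in> witt \<Longrightarrow> inv_into witt \<sigma> (\<sigma> x) = x"
proof -
  have bij: "bij_betw \<sigma> witt witt" using assms unfolding witt_lie_aut_def by blast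
  let ?t = "inv_into witt \<sigma>"
  have bi: "bij_betw ?t witt witt" using bij by (rule bij_betw_inv_into)
  have ff: "\<And>x. x \<in> witt \<Longrightarrow> \<sigma> (?t x) = x"
    using bij_betw_inv_into_right[OF bij] by blast
  have ti: "\<And>x. x \<in> witt \<Longrightarrow> ?t (\<sigma> x) = x"
    using bij_betw_inv_into_left[OF bij] by blast
  have tin: "\<And>x. x \<in> witt \<Longrightarrow> ?t x \<in> witt" using bij_betw_apply[OF bi] by blast
  show "\<And>x. x \<in> witt \<Longrightarrow> \<sigma> (?t x) = x" by (rule ff)
  show "\<And>x. x \<in> witt \<Longrightarrow> ?t (\<sigma> x) = x" by (rule ti)
  have add: "?t (witt_add v w) = witt_add (?t v) (?t w)" if "v \<in> witt" "w \<in> witt" for v w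
  proof -
    have "\<sigma> (witt_add (?t v) (?t w)) = witt_add (\<sigma> (?t v)) (\<sigma> (?t w))"
      using assms that tin unfolding witt_lie_aut_def by blast
    then have "\<sigma> (witt_add (?t v) (?t w)) = witt_add v w" using ff that by simp
    then show ?thesis using ti[OF witt_add_in[OF tin[OF that(1)] tin[OF that(2)]]] by simp
  qed
  have sc: "?t (witt_scale c w) = witt_scale c (?t w)" if "w \<in> witt" for c w
  proof -
    have "\<sigma> (witt_scale c (?t w)) = witt_scale c (\<sigma> (?t w))"
      using assms that tin unfolding witt_lie_aut_def by blast
    then have "\<sigma> (witt_scale c (?t w)) = witt_scale c w" using ff that by simp
    then have "?t (witt_scale c w) = ?t (\<sigma> (witt_scale c (?t w)))" by simp
    also have "\<dots> = witt_scale c (?t w)" using ti[OF witt_scale_in[OF tin[OF that]]] .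
    finally show ?thesis .
  qed
  have br: "?t (witt_bracket v w) = witt_bracket (?t v) (?t w)" if "v \<in> witt" "w \<in> witt" for v w
  proof -
    have "\<sigma> (witt_bracket (?t v) (?t w)) = witt_bracket (\<sigma> (?t v)) (\<sigma> (?t w))"
      using assms that tin unfolding witt_lie_aut_def by blast
    then have "\<sigma> (witt_bracket (?t v) (?t w)) = witt_bracket v w" using ff that by simp
    then show ?thesis using ti[OF witt_bracket_in[OF tin[OF that(1)] tin[OF that(2)]]] by simp
  qed
  show "witt_lie_aut ?t" unfolding witt_lie_aut_def using bi add sc br by blast
qed

definition wsum :: "('a \<Rightarrow> (int^'n \<Rightarrow> 'k::field^'n)) \<Rightarrow> 'a set \<Rightarrow> (int^'n \<Rightarrow> 'k^'n)" where
  "wsum f S = (\<lambda>\<gamma>. \<Sum>s\<in>S. f s \<gamma>)"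

lemma wsum_in: "finite S \<Longrightarrow> (\<And>s. s \<in> S \<Longrightarrow> f s \<in> witt) \<Longrightarrow> wsum f S \<in> witt"
proof (induction S rule: finite_induct)
  case empty then show ?case by (simp add: wsum_def zero_in)
next
  case (insert x F)
  have "wsum f (insert x F) = witt_add (f x) (wsum f F)"
    using insert by (simp add: wsum_def witt_add_def)
  moreover have "f x \<in> witt" using insert.prems by simp
  moreover have "wsum f F \<in> witt" using insert.IH insert.prems by simp
  ultimately show ?case by (simp add: witt_add_in)
qed

lemma aut_wsum:
  assumes "witt_lie_aut \<sigma>"
  shows "finite S \<Longrightarrow> (\<And>s. s \<in> S \<Longrightarrow> f s \<in> witt) \<Longrightarrow> \<sigma> (wsum f S) = wsum (\<lambda>s. \<sigma> (f s)) S"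
proof (induction S rule: finite_induct)
  case empty then show ?case using aut_zero[OF assms] by (simp add: wsum_def)
next
  case (insert x F)
  have e: "\<And>g. wsum g (insert x F) = witt_add (g x) (wsum g F)"
    using insert by (simp add: wsum_def witt_add_def)
  have fi: "f x \<in> witt" "wsum f F \<in> witt" using insert wsum_in by auto
  have "\<sigma> (wsum f (insert x F)) = witt_add (\<sigma> (f x)) (\<sigma> (wsum f F))"
    using assms fi unfolding e witt_lie_aut_def by blast
  moreover have "\<sigma> (wsum f F) = wsum (\<lambda>s. \<sigma> (f s)) F" using insert.IH insert.prems by simp
  ultimately show ?case using e[of "\<lambda>s. \<sigma> (f s)"] by simp
qed

lemma bracket_H:
  assumes "h \<in> xH 0"
  shows "witt_bracket h u \<gamma> = kdot (h 0) \<gamma> *s u \<gamma>"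
proof (cases "h 0 = 0")
  case True
  then have "{\<alpha>. h \<alpha> \<noteq> 0} = {}" using assms by (auto simp: xH_def) (metis)
  then show ?thesis using True by (simp add: witt_bracket_def)
next
  case False
  then have "{\<alpha>. h \<alpha> \<noteq> 0} = {0}" using assms by (auto simp: xH_def)
  then show ?thesis by (simp add: witt_bracket_def)
qed

lemma Hel_xH: "Hel i \<in> xH 0" by (simp add: Hel_def xH_def)
lemma Hel_in: "(Hel (i::'n) :: int^'n \<Rightarrow> 'k::field^'n) \<in> witt"
proof -
  have "{\<gamma>. Hel i \<gamma> \<noteq> (0::'k::field^'n)} \<subseteq> {0}" by (auto simp: Hel_def)
  then show ?thesis unfolding witt_def by (meson finite.emptyI finite_insert finite_subset mem_Collect_eq)
qed

lemma xH_in: "w \<in> xH \<alpha> \<Longrightarrow> w \<in> witt"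
proof -
  assume "w \<in> xH \<alpha>"
  then have "{\<gamma>. w \<gamma> \<noteq> 0} \<subseteq> {\<alpha>}" by (auto simp: xH_def)
  then show ?thesis unfolding witt_def by (meson finite.emptyI finite_insert finite_subset mem_Collect_eq)
qed

lemma bracket_Hel:
  fixes w :: "int^'n \<Rightarrow> 'k::field^'n"
  assumes "w \<in> xH \<alpha>"
  shows "witt_bracket (Hel i) w = witt_scale (of_int (\<alpha> $ i)) w"
proof
  fix \<gamma>
  have "witt_bracket (Hel i) w \<gamma> = of_int (\<gamma> $ i) *s w \<gamma>"
    using bracket_H[OF Hel_xH] by (simp add: Hel_def kdot_axis)
  then show "witt_bracket (Hel i) w \<gamma> = witt_scale (of_int (\<alpha> $ i)) w \<gamma>"
    using assms by (cases "\<gamma> = \<alpha>") (auto simp: witt_scale_def xH_def)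
qed


inductive_set lc :: "(int^'n \<Rightarrow> 'k::field^'n) set \<Rightarrow> (int^'n \<Rightarrow> 'k^'n) set" for B where
  lc0: "(\<lambda>\<gamma>. 0) \<in> lc B"
| lcB: "b \<in> B \<Longrightarrow> b \<in> lc B"
| lcA: "u \<in> lc B \<Longrightarrow> v \<in> lc B \<Longrightarrow> witt_add u v \<in> lc B"
| lcS: "u \<in> lc B \<Longrightarrow> witt_scale c u \<in> lc B"

lemma lc_supp: "u \<in> lc B \<Longrightarrow> supp u \<subseteq> \<Union> (supp ` B)"
proof (induction rule: lc.induct)
  case (lcA u v)
  have "supp (witt_add u v) \<subseteq> supp u \<union> supp v" by (auto simp: supp_def witt_add_def)
  then show ?case using lcA by blast
qed (auto simp: supp_def witt_scale_def)

lemma lc_witt: assumes "B \<subseteq> witt" shows "u \<in> lc B \<Longrightarrow> u \<in> witt"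
  by (induction rule: lc.induct) (use assms in \<open>auto simp: zero_in witt_add_in witt_scale_in\<close>)

lemma lc_aut:
  assumes "witt_lie_aut \<sigma>" "B \<subseteq> witt"
  shows "u \<in> lc B \<Longrightarrow> \<sigma> u \<in> lc (\<sigma> ` B)"
proof (induction rule: lc.induct)
  case lc0 then show ?case using aut_zero[OF assms(1)] lc.lc0 by simp
next
  case (lcB b) then show ?case by (simp add: lc.lcB)
next
  case (lcA u v)
  have "u \<in> witt" "v \<in> witt" using lcA lc_witt assms(2) by auto
  then have "\<sigma> (witt_add u v) = witt_add (\<sigma> u) (\<sigma> v)" using assms(1) unfolding witt_lie_aut_def by blast
  then show ?case using lcA lc.lcA by simp
next
  case (lcS u c)
  have "u \<in> witt" using lcS lc_witt assms(2) by auto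
  then have "\<sigma> (witt_scale c u) = witt_scale c (\<sigma> u)" using assms(1) unfolding witt_lie_aut_def by blast
  then show ?case using lcS lc.lcS by simp
qed

lemma lc_wsum: "finite S \<Longrightarrow> (\<And>s. s \<in> S \<Longrightarrow> f s \<in> lc B) \<Longrightarrow> wsum f S \<in> lc B"
proof (induction S rule: finite_induct)
  case empty
  have "wsum f {} = (\<lambda>\<gamma>. 0)" by (simp add: wsum_def)
  then show ?case using lc.lc0 by simp
next
  case (insert x F)
  have "wsum f (insert x F) = witt_add (f x) (wsum f F)"
    using insert by (simp add: wsum_def witt_add_def)
  moreover have "f x \<in> lc B" using insert.prems by simp
  moreover have "wsum f F \<in> lc B" using insert.IH insert.prems by simp
  ultimately show ?case by (simp add: lc.lcA)
qed

definition LF :: "(int^'n \<Rightarrow> 'k::field^'n) \<Rightarrow> bool" where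
  "LF h \<longleftrightarrow> (\<forall>v\<in>witt. \<exists>B. finite B \<and> B \<subseteq> witt \<and> (\<forall>k. (witt_bracket h ^^ k) v \<in> lc B))"

lemma iter_in: "h \<in> witt \<Longrightarrow> v \<in> witt \<Longrightarrow> (witt_bracket h ^^ k) v \<in> witt"
  by (induction k) (auto simp: witt_bracket_in)

lemma aut_iter:
  assumes "witt_lie_aut \<sigma>" "h \<in> witt" "v \<in> witt"
  shows "\<sigma> ((witt_bracket h ^^ k) v) = (witt_bracket (\<sigma> h) ^^ k) (\<sigma> v)"
proof (induction k)
  case 0 then show ?case by simp
next
  case (Suc k)
  have "(witt_bracket h ^^ k) v \<in> witt" using iter_in assms by blast
  then have "\<sigma> (witt_bracket h ((witt_bracket h ^^ k) v)) = witt_bracket (\<sigma> h) (\<sigma> ((witt_bracket h ^^ k) v))"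
    using assms unfolding witt_lie_aut_def by blast
  then show ?case using Suc by simp
qed

lemma LF_aut:
  fixes \<sigma> :: "(int^'n \<Rightarrow> 'k::field^'n) \<Rightarrow> (int^'n \<Rightarrow> 'k^'n)"
  assumes "witt_lie_aut \<sigma>" "h \<in> witt" "LF h"
  shows "LF (\<sigma> h)"
  unfolding LF_def
proof
  fix v :: "int^'n \<Rightarrow> 'k^'n" assume v: "v \<in> witt"
  let ?t = "inv_into witt \<sigma>"
  have tv: "?t v \<in> witt" using aut_in[OF aut_inv(1)[OF assms(1)] v] .
  have sv: "\<sigma> (?t v) = v" using aut_inv(2)[OF assms(1) v] .
  obtain B where B: "finite B" "B \<subseteq> witt" "\<And>k. (witt_bracket h ^^ k) (?t v) \<in> lc B"
    using assms(3) tv unfolding LF_def by blast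
  have "(witt_bracket (\<sigma> h) ^^ k) v \<in> lc (\<sigma> ` B)" for k
  proof -
    have "\<sigma> ((witt_bracket h ^^ k) (?t v)) \<in> lc (\<sigma> ` B)" by (rule lc_aut[OF assms(1) B(2) B(3)])
    then show ?thesis unfolding aut_iter[OF assms(1,2) tv] sv .
  qed
  moreover have "\<sigma> ` B \<subseteq> witt" using B(2) aut_in[OF assms(1)] by blast
  ultimately show "\<exists>B. finite B \<and> B \<subseteq> witt \<and> (\<forall>k. (witt_bracket (\<sigma> h) ^^ k) v \<in> lc B)"
    using B(1) by blast
qed

definition delta :: "int^'n \<Rightarrow> 'k::field^'n \<Rightarrow> (int^'n \<Rightarrow> 'k^'n)" where
  "delta \<beta> a = (\<lambda>\<gamma>. if \<gamma> = \<beta> then a else 0)"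

lemma delta_xH: "delta \<beta> a \<in> xH \<beta>" by (simp add: delta_def xH_def)
lemma delta_in: "delta \<beta> a \<in> witt" using xH_in[OF delta_xH] .

lemma LF_H:
  fixes h :: "int^'n \<Rightarrow> 'k::field^'n"
  assumes "h \<in> xH 0"
  shows "LF h"
  unfolding LF_def
proof
  fix v :: "int^'n \<Rightarrow> 'k^'n" assume v: "v \<in> witt"
  have it: "(witt_bracket h ^^ k) v = (\<lambda>\<gamma>. (kdot (h 0) \<gamma>)^k *s v \<gamma>)" for k
    by (induction k) (auto simp: bracket_H[OF assms])
  let ?B = "(\<lambda>\<beta>. delta \<beta> (v \<beta>)) ` supp v"
  have fs: "finite (supp v)" using v witt_supp by blast
  have "(\<lambda>\<gamma>. c \<gamma> *s v \<gamma>) \<in> lc ?B" for c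
  proof -
    have "(\<lambda>\<gamma>. c \<gamma> *s v \<gamma>) = wsum (\<lambda>\<beta>. witt_scale (c \<beta>) (delta \<beta> (v \<beta>))) (supp v)"
    proof
      fix \<gamma>
      have "wsum (\<lambda>\<beta>. witt_scale (c \<beta>) (delta \<beta> (v \<beta>))) (supp v) \<gamma>
          = (\<Sum>\<beta>\<in>supp v. if \<gamma> = \<beta> then c \<gamma> *s v \<gamma> else 0)"
        unfolding wsum_def witt_scale_def delta_def by (intro sum.cong) auto
      also have "\<dots> = (if \<gamma> \<in> supp v then c \<gamma> *s v \<gamma> else 0)"
        using fs by (simp add: sum.delta)
      also have "\<dots> = c \<gamma> *s v \<gamma>" by (auto simp: supp_def)
      finally show "c \<gamma> *s v \<gamma> = wsum (\<lambda>\<beta>. witt_scale (c \<beta>) (delta \<beta> (v \<beta>))) (supp v) \<gamma>" by simp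
    qed
    also have "\<dots> \<in> lc ?B"
      using fs by (intro lc_wsum lc.lcS lc.lcB) auto
    finally show ?thesis .
  qed
  moreover have "?B \<subseteq> witt" using delta_in by blast
  ultimately show "\<exists>B. finite B \<and> B \<subseteq> witt \<and> (\<forall>k. (witt_bracket h ^^ k) v \<in> lc B)"
    unfolding it using fs by (intro exI[of _ ?B]) auto
qed


lemma generic_dir:
  fixes p :: "'a::euclidean_space"
  assumes "finite D" "0 \<notin> D" "p \<noteq> 0"
  shows "\<exists>r. p \<bullet> r > 0 \<and> (\<forall>d\<in>D. d \<bullet> r \<noteq> 0)"
proof (rule ccontr)
  assume n: "\<not> ?thesis"
  let ?U = "{r. p \<bullet> r > 0}"
  have "open ?U" by (rule open_halfspace_gt)
  moreover have "?U \<noteq> {}" using assms(3) by (auto intro!: exI[of _ p])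
  ultimately have nn: "\<not> negligible ?U" by (rule open_not_negligible)
  have "?U \<subseteq> \<Union> ((\<lambda>d. {r. d \<bullet> r = 0}) ` D)" using n by auto
  moreover have "negligible (\<Union> ((\<lambda>d. {r. d \<bullet> r = 0}) ` D))"
    using assms(1,2) by (intro negligible_Union) (auto intro!: negligible_hyperplane)
  ultimately show False using nn negligible_subset by blast
qed

definition rv :: "int^'n \<Rightarrow> real^'n" where "rv \<gamma> = (\<chi> i. real_of_int (\<gamma> $ i))"

lemma rv_inner: "rv \<gamma> \<bullet> r = kdot r \<gamma>"
  by (simp add: rv_def inner_vec_def kdot_def mult.commute)

lemma rv_eq0: "rv \<gamma> = 0 \<longleftrightarrow> \<gamma> = 0"
  by (simp add: rv_def vec_eq_iff)


fun cseq :: "'k::field^'n \<Rightarrow> int^'n \<Rightarrow> int^'n \<Rightarrow> nat \<Rightarrow> 'k" where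
  "cseq a \<alpha> \<beta> 0 = 1"
| "cseq a \<alpha> \<beta> (Suc k) = cseq a \<alpha> \<beta> k * (kdot a (\<beta> + int k *s \<alpha>) - kdot a \<alpha>)"

lemma kdot_axis2: "kdot a (axis i 1) = a $ i"
proof -
  have "kdot a (axis i 1) = (\<Sum>j\<in>UNIV. if j = i then a $ j else 0)"
    unfolding kdot_def by (intro sum.cong) (auto simp: axis_def)
  also have "\<dots> = a $ i" by simp
  finally show ?thesis .
qed

lemma good_beta:
  fixes a :: "'k::field_char_0^'n"
  assumes "a \<noteq> 0"
  shows "\<exists>\<beta>. \<forall>k::nat. kdot a \<beta> + of_nat k * kdot a \<alpha> - kdot a \<alpha> \<noteq> 0"
proof (cases "kdot a \<alpha> = 0")
  case True
  obtain i where "a $ i \<noteq> 0" using assms by (auto simp: vec_eq_iff)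
  then show ?thesis using True by (intro exI[of _ "axis i 1"]) (simp add: kdot_axis2)
next
  case False
  have "kdot a (\<alpha> + \<alpha>) + of_nat k * kdot a \<alpha> - kdot a \<alpha> = of_nat (Suc k) * kdot a \<alpha>" for k
    unfolding kdot_add_right by (simp add: algebra_simps)
  then show ?thesis using False by (intro exI[of _ "\<alpha> + \<alpha>"]) (simp del: of_nat_Suc)
qed

lemma LF_imp_H:
  fixes h :: "int^'n \<Rightarrow> 'k::field_char_0^'n"
  assumes hw: "h \<in> witt" and lf: "LF h"
  shows "h \<in> xH 0"
proof (rule ccontr)
  assume "h \<notin> xH 0"
  then obtain \<alpha>0 where a0: "\<alpha>0 \<noteq> 0" "h \<alpha>0 \<noteq> 0" by (auto simp: xH_def)
  let ?S = "supp h"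
  have fS: "finite ?S" using hw witt_supp by blast
  let ?P = "{(s,s'). s \<in> ?S \<and> s' \<in> ?S \<and> s \<noteq> s'}"
  let ?D = "(\<lambda>(s,s'). rv (s - s')) ` ?P"
  have "?P \<subseteq> ?S \<times> ?S" by auto
  then have "finite ?P" using fS by (meson finite_SigmaI finite_subset)
  then have fD: "finite ?D" by simp
  have zD: "0 \<notin> ?D" by (auto simp: rv_eq0)
  have "rv \<alpha>0 \<noteq> 0" using a0 by (simp add: rv_eq0)
  then have "\<exists>r. rv \<alpha>0 \<bullet> r > 0 \<and> (\<forall>d\<in>?D. d \<bullet> r \<noteq> 0)"
    by (rule generic_dir[OF fD zD])
  then obtain r where r0: "rv \<alpha>0 \<bullet> r > 0 \<and> (\<forall>d\<in>?D. d \<bullet> r \<noteq> 0)"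
    by (elim exE) assumption
  have r: "rv \<alpha>0 \<bullet> r > 0" "\<forall>d\<in>?D. d \<bullet> r \<noteq> 0" using r0 by simp_all
  define f where "f \<gamma> = kdot r \<gamma>" for \<gamma>
  have f0: "f \<alpha>0 > 0" using r(1) by (simp add: f_def rv_inner)
  have fdiff: "f (x - y) = f x - f y" for x y by (simp add: f_def kdot_diff_right)
  have fsum: "f (x + y) = f x + f y" for x y by (simp add: f_def kdot_add_right)
  have fsc: "f (int k *s x) = real k * f x" for k x by (simp add: f_def kdot_scale_right)
  have finj: "f s \<noteq> f s'" if "s \<in> ?S" "s' \<in> ?S" "s \<noteq> s'" for s s'
  proof -
    have "rv (s - s') \<in> ?D" using that by auto
    have "f (s - s') \<noteq> 0" using r(2) that by (auto simp: f_def rv_inner)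
    then show ?thesis by (simp add: fdiff)
  qed
  have a0S: "\<alpha>0 \<in> ?S" using a0 by (simp add: supp_def)
  have ne: "f ` ?S \<noteq> {}" using a0S by blast
  have "Max (f ` ?S) \<in> f ` ?S" using fS ne by (intro Max_in) auto
  then obtain \<alpha> where aS: "\<alpha> \<in> ?S" and am: "f \<alpha> = Max (f ` ?S)" by auto
  have amax: "f s \<le> f \<alpha>" if "s \<in> ?S" for s using am fS that by simp
  have astrict: "f s < f \<alpha>" if "s \<in> ?S" "s \<noteq> \<alpha>" for s
    using amax[OF that(1)] finj[OF that(1) aS that(2)] by linarith
  have fapos: "f \<alpha> > 0" using amax[OF a0S] f0 by linarith
  have anz: "\<alpha> \<noteq> 0" using fapos by (auto simp: f_def)
  define a where "a = h \<alpha>"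
  have anz': "a \<noteq> 0" using aS by (simp add: a_def supp_def)
  obtain \<beta> where hb: "\<And>k::nat. kdot a \<beta> + of_nat k * kdot a \<alpha> - kdot a \<alpha> \<noteq> 0"
    using good_beta[OF anz', of \<alpha>] by blast
  define u where "u k = (witt_bracket h ^^ k) (delta \<beta> a)" for k
  have expand: "witt_bracket h w \<gamma> = (\<Sum>\<alpha>'\<in>?S. kdot (h \<alpha>') (\<gamma> - \<alpha>') *s w (\<gamma> - \<alpha>') - kdot (w (\<gamma> - \<alpha>')) \<alpha>' *s h \<alpha>')" for w \<gamma>
    by (simp add: witt_bracket_def supp_def)
  have claim: "u k (\<beta> + int k *s \<alpha>) = cseq a \<alpha> \<beta> k *s a \<and> (\<forall>\<gamma>. f \<gamma> > f \<beta> + real k * f \<alpha> \<longrightarrow> u k \<gamma> = 0)" for k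
  proof (induction k)
    case 0
    have "f \<gamma> > f \<beta> \<Longrightarrow> \<gamma> \<noteq> \<beta>" for \<gamma> by auto
    then show ?case by (auto simp: u_def delta_def)
  next
    case (Suc k)
    have uS: "u (Suc k) = witt_bracket h (u k)" by (simp add: u_def)
    have hi: "u k \<gamma> = 0" if "f \<gamma> > f \<beta> + real k * f \<alpha>" for \<gamma> using Suc.IH that by blast
    have part2: "u (Suc k) \<gamma> = 0" if g: "f \<gamma> > f \<beta> + real (Suc k) * f \<alpha>" for \<gamma>
    proof -
      have "u k (\<gamma> - \<alpha>') = 0" if "\<alpha>' \<in> ?S" for \<alpha>'
      proof (rule hi)
        have "f \<alpha>' \<le> f \<alpha>" using amax that by blast
        then show "f (\<gamma> - \<alpha>') > f \<beta> + real k * f \<alpha>" using g by (simp add: fdiff algebra_simps)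
      qed
      then show ?thesis unfolding uS expand by (intro sum.neutral) simp
    qed
    let ?g = "\<beta> + int (Suc k) *s \<alpha>"
    have gsplit: "?g - \<alpha> = \<beta> + int k *s \<alpha>"
      by (simp add: vec_eq_iff algebra_simps)
    have zero_o: "u k (?g - \<alpha>') = 0" if "\<alpha>' \<in> ?S" "\<alpha>' \<noteq> \<alpha>" for \<alpha>'
    proof (rule hi)
      have "f \<alpha>' < f \<alpha>" using astrict that by blast
      moreover have "f ?g = f \<beta> + real (Suc k) * f \<alpha>" by (simp only: fsum fsc)
      ultimately show "f (?g - \<alpha>') > f \<beta> + real k * f \<alpha>" by (simp add: fdiff algebra_simps)
    qed
    have "u (Suc k) ?g = (\<Sum>\<alpha>'\<in>?S. if \<alpha>' = \<alpha> then
        kdot a (\<beta> + int k *s \<alpha>) *s (cseq a \<alpha> \<beta> k *s a) - kdot (cseq a \<alpha> \<beta> k *s a) \<alpha> *s a else 0)"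
      unfolding uS expand
      using zero_o Suc.IH by (intro sum.cong) (auto simp: gsplit a_def)
    also have "\<dots> = kdot a (\<beta> + int k *s \<alpha>) *s (cseq a \<alpha> \<beta> k *s a) - kdot (cseq a \<alpha> \<beta> k *s a) \<alpha> *s a"
      using fS aS by simp
    also have "\<dots> = (kdot a (\<beta> + int k *s \<alpha>) * cseq a \<alpha> \<beta> k - cseq a \<alpha> \<beta> k * kdot a \<alpha>) *s a"
      by (simp only: kdot_scale_left vector_smult_assoc vector_sub_rdistrib)
    also have "\<dots> = cseq a \<alpha> \<beta> (Suc k) *s a"
      by (intro arg_cong[where f="\<lambda>t. t *s a"]) (simp add: algebra_simps)
    finally show ?case using part2 by blast
  qed
  have cnz: "cseq a \<alpha> \<beta> k \<noteq> 0" for k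
  proof (induction k)
    case (Suc k)
    have "kdot a (\<beta> + int k *s \<alpha>) - kdot a \<alpha> = kdot a \<beta> + of_nat k * kdot a \<alpha> - kdot a \<alpha>"
      by (simp add: kdot_add_right kdot_scale_right)
    then show ?case using Suc hb by simp
  qed simp
  have dw: "delta \<beta> a \<in> witt" by (rule delta_in)
  obtain B where B: "finite B" "B \<subseteq> witt" "\<And>k. u k \<in> lc B"
    using lf dw unfolding LF_def u_def by blast
  let ?F = "\<Union> (supp ` B)"
  have fF: "finite ?F" using B(1,2) witt_supp by auto
  let ?p = "\<lambda>k::nat. \<beta> + int k *s \<alpha>"
  have "?p k \<in> ?F" for k
  proof -
    have "?p k \<in> supp (u k)" using claim[of k] cnz[of k] anz' by (simp add: supp_def)
    then show ?thesis using lc_supp[OF B(3)] by blast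
  qed
  then have "range ?p \<subseteq> ?F" by blast
  then have fr: "finite (range ?p)" using fF finite_subset by blast
  have "inj ?p"
  proof
    fix k k' assume "?p k = ?p k'"
    then have "int k *s \<alpha> - int k' *s \<alpha> = 0" by simp
    then have "(int k - int k') *s \<alpha> = 0" by (simp add: vector_sub_rdistrib)
    then have "int k - int k' = 0" using anz vector_mul_eq_0 by blast
    then show "k = k'" by simp
  qed
  then have "finite (UNIV :: nat set)" using fr finite_imageD by blast
  then show False by simp
qed


lemma H_pres:
  fixes \<sigma> :: "(int^'n \<Rightarrow> 'k::field_char_0^'n) \<Rightarrow> (int^'n \<Rightarrow> 'k^'n)"
  assumes "witt_lie_aut \<sigma>" "h \<in> xH 0"
  shows "\<sigma> h \<in> xH 0"
proof -
  have hw: "h \<in> witt" using xH_in[OF assms(2)] .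
  have "LF (\<sigma> h)" using LF_aut[OF assms(1) hw LF_H[OF assms(2)]] .
  then show ?thesis using LF_imp_H aut_in[OF assms(1) hw] by blast
qed

lemma eigen:
  fixes \<sigma> :: "(int^'n \<Rightarrow> 'k::field_char_0^'n) \<Rightarrow> (int^'n \<Rightarrow> 'k^'n)"
  assumes au: "witt_lie_aut \<sigma>" and w: "w \<in> xH \<alpha>" and nz: "\<sigma> w \<gamma> \<noteq> 0"
  shows "Amat \<sigma> *v int_vec \<gamma> = int_vec \<alpha>"
proof -
  have ww: "w \<in> witt" using xH_in[OF w] .
  have "kdot (\<sigma> (Hel i) 0) \<gamma> = of_int (\<alpha> $ i)" for i
  proof -
    have "\<sigma> (witt_bracket (Hel i) w) = witt_bracket (\<sigma> (Hel i)) (\<sigma> w)"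
      using au Hel_in ww unfolding witt_lie_aut_def by blast
    moreover have "\<sigma> (witt_bracket (Hel i) w) = witt_scale (of_int (\<alpha> $ i)) (\<sigma> w)"
      using au ww bracket_Hel[OF w, of i] unfolding witt_lie_aut_def by simp
    ultimately have "witt_bracket (\<sigma> (Hel i)) (\<sigma> w) = witt_scale (of_int (\<alpha> $ i)) (\<sigma> w)"
      by simp
    then have "witt_bracket (\<sigma> (Hel i)) (\<sigma> w) \<gamma> = of_int (\<alpha> $ i) *s \<sigma> w \<gamma>"
      by (simp add: witt_scale_def)
    then have "kdot (\<sigma> (Hel i) 0) \<gamma> *s \<sigma> w \<gamma> = of_int (\<alpha> $ i) *s \<sigma> w \<gamma>"
      using bracket_H[OF H_pres[OF au Hel_xH]] by simp
    then show ?thesis using nz by simp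
  qed
  then show ?thesis
    by (simp add: vec_eq_iff matrix_vector_mult_def Amat_def int_vec_def kdot_def)
qed

lemma Amat_inv:
  fixes \<sigma> \<tau> :: "(int^'n \<Rightarrow> 'k::field_char_0^'n) \<Rightarrow> (int^'n \<Rightarrow> 'k^'n)"
  assumes as: "witt_lie_aut \<sigma>" and at: "witt_lie_aut \<tau>"
    and st: "\<And>x. x \<in> witt \<Longrightarrow> \<sigma> (\<tau> x) = x"
  shows "Amat \<tau> ** Amat \<sigma> = mat 1"
proof -
  let ?A = "Amat \<sigma>" and ?B = "Amat \<tau>"
  have row: "(\<Sum>j\<in>UNIV. ?B $ i $ j *s ?A $ j) = axis i 1" for i
  proof -
    have tH: "\<tau> (Hel i) \<in> xH 0" using H_pres[OF at Hel_xH] .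
    have e: "\<tau> (Hel i) = wsum (\<lambda>j. witt_scale (?B $ i $ j) (Hel j)) UNIV"
    proof
      fix \<gamma>
      show "\<tau> (Hel i) \<gamma> = wsum (\<lambda>j. witt_scale (?B $ i $ j) (Hel j)) UNIV \<gamma>"
      proof (cases "\<gamma> = 0")
        case True
        have "wsum (\<lambda>j. witt_scale (?B $ i $ j) (Hel j)) UNIV \<gamma> = (\<Sum>j\<in>UNIV. (\<tau> (Hel i) 0 $ j) *s axis j 1)"
          using True by (simp add: wsum_def witt_scale_def Hel_def Amat_def)
        also have "\<dots> = \<tau> (Hel i) 0" by (rule basis_expansion)
        finally show ?thesis using True by simp
      next
        case False
        then show ?thesis using tH by (simp add: wsum_def witt_scale_def Hel_def xH_def)
      qed
    qed
    have fw: "witt_scale (?B $ i $ j) (Hel j) \<in> witt" for j using witt_scale_in[OF Hel_in] .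
    have "Hel i = \<sigma> (\<tau> (Hel i))" using st[OF Hel_in] by simp
    also have "\<dots> = wsum (\<lambda>j. \<sigma> (witt_scale (?B $ i $ j) (Hel j))) UNIV"
      unfolding e by (rule aut_wsum[OF as]) (simp_all add: fw)
    also have "\<dots> = wsum (\<lambda>j. witt_scale (?B $ i $ j) (\<sigma> (Hel j))) UNIV"
    proof -
      have "\<sigma> (witt_scale c (Hel j)) = witt_scale c (\<sigma> (Hel j))" for c and j :: 'n
        using as Hel_in[of j] unfolding witt_lie_aut_def by blast
      then show ?thesis by simp
    qed
    finally have "Hel i 0 = wsum (\<lambda>j. witt_scale (?B $ i $ j) (\<sigma> (Hel j))) UNIV 0" by simp
    then show ?thesis by (simp add: Hel_def wsum_def witt_scale_def Amat_def)
  qed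
  show ?thesis
  proof (simp add: vec_eq_iff, intro allI)
    fix i k
    have "(?B ** ?A) $ i $ k = (\<Sum>j\<in>UNIV. ?B $ i $ j *s ?A $ j) $ k"
      by (simp add: matrix_matrix_mult_def sum_component)
    also have "\<dots> = mat 1 $ i $ k" using row[of i] by (simp add: axis_def mat_def)
    finally show "(?B ** ?A) $ i $ k = mat 1 $ i $ k" .
  qed
qed


lemma int_vec_inj:
  fixes x y :: "int^'n"
  shows "(int_vec x :: 'k::field_char_0^'n) = int_vec y \<Longrightarrow> x = y"
  by (simp add: int_vec_def vec_eq_iff)

theorem lemma2p6:
  fixes \<sigma> :: "(int^'n \<Rightarrow> 'k::field_char_0^'n) \<Rightarrow> (int^'n \<Rightarrow> 'k^'n)"
    and \<alpha> :: "int^'n"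
  assumes "witt_lie_aut \<sigma>"
  shows "\<exists>\<beta> :: int^'n. int_vec \<beta> = Amat (inv_into witt \<sigma>) *v int_vec \<alpha>
           \<and> \<sigma> ` xH \<alpha> = xH \<beta>"
proof -
  let ?t = "inv_into witt \<sigma>"
  have as: "witt_lie_aut \<sigma>" by (rule assms)
  have at: "witt_lie_aut ?t" using aut_inv(1)[OF as] .
  have st: "\<And>x. x \<in> witt \<Longrightarrow> \<sigma> (?t x) = x" using aut_inv(2)[OF as] .
  have ts: "\<And>x. x \<in> witt \<Longrightarrow> ?t (\<sigma> x) = x" using aut_inv(3)[OF as] .
  let ?A = "Amat \<sigma>" and ?B = "Amat ?t"
  have BA: "?B ** ?A = mat 1" using Amat_inv[OF as at st] .
  have AB: "?A ** ?B = mat 1" using Amat_inv[OF at as ts] .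
  obtain i0 :: 'n where True by blast
  define w0 where "w0 = (delta \<alpha> (axis i0 1) :: int^'n \<Rightarrow> 'k^'n)"
  have w0x: "w0 \<in> xH \<alpha>" unfolding w0_def by (rule delta_xH)
  have w0w: "w0 \<in> witt" using xH_in[OF w0x] .
  have w0nz: "w0 \<noteq> (\<lambda>\<gamma>. 0)"
  proof
    assume "w0 = (\<lambda>\<gamma>. 0)"
    then have "w0 \<alpha> = 0" by simp
    then have "(axis i0 1 :: 'k^'n) $ i0 = 0" by (simp add: w0_def delta_def)
    then show False by (simp add: axis_def)
  qed
  have "\<sigma> w0 \<noteq> (\<lambda>\<gamma>. 0)"
  proof
    assume "\<sigma> w0 = (\<lambda>\<gamma>. 0)"
    then have "?t (\<sigma> w0) = ?t (\<sigma> (\<lambda>\<gamma>. 0))" using aut_zero[OF as] by simp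
    then show False using ts[OF w0w] ts[OF zero_in] w0nz by simp
  qed
  then obtain \<beta> where b: "\<sigma> w0 \<beta> \<noteq> 0" by auto
  have Ab: "?A *v int_vec \<beta> = int_vec \<alpha>" using eigen[OF as w0x b] .
  have Ba: "?B *v int_vec \<alpha> = int_vec \<beta>"
  proof -
    have "?B *v int_vec \<alpha> = ?B *v (?A *v int_vec \<beta>)" using Ab by simp
    also have "\<dots> = (?B ** ?A) *v int_vec \<beta>" by (simp add: matrix_vector_mul_assoc)
    finally show ?thesis using BA by (simp add: matrix_vector_mul_lid)
  qed
  have sub: "\<sigma> ` xH \<alpha> \<subseteq> xH \<beta>"
  proof
    fix v assume "v \<in> \<sigma> ` xH \<alpha>"
    then obtain w where w: "w \<in> xH \<alpha>" and v: "v = \<sigma> w" by blast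
    have "\<sigma> w \<delta> = 0" if "\<delta> \<noteq> \<beta>" for \<delta>
    proof (rule ccontr)
      assume "\<sigma> w \<delta> \<noteq> 0"
      then have "?A *v int_vec \<delta> = int_vec \<alpha>" using eigen[OF as w] by blast
      then have "?B *v (?A *v int_vec \<delta>) = int_vec \<beta>" using Ba by simp
      then have "(int_vec \<delta> :: 'k^'n) = int_vec \<beta>" using BA
        by (simp add: matrix_vector_mul_assoc matrix_vector_mul_lid)
      then show False using int_vec_inj that by blast
    qed
    then show "v \<in> xH \<beta>" using v by (simp add: xH_def)
  qed
  have sup: "xH \<beta> \<subseteq> \<sigma> ` xH \<alpha>"
  proof
    fix u :: "int^'n \<Rightarrow> 'k^'n" assume u: "u \<in> xH \<beta>"
    have uw: "u \<in> witt" using xH_in[OF u] .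
    have "?t u \<delta> = 0" if "\<delta> \<noteq> \<alpha>" for \<delta>
    proof (rule ccontr)
      assume "?t u \<delta> \<noteq> 0"
      then have "?B *v int_vec \<delta> = int_vec \<beta>" using eigen[OF at u] by blast
      then have "?A *v (?B *v int_vec \<delta>) = int_vec \<alpha>" using Ab by simp
      then have "(int_vec \<delta> :: 'k^'n) = int_vec \<alpha>" using AB
        by (simp add: matrix_vector_mul_assoc matrix_vector_mul_lid)
      then show False using int_vec_inj that by blast
    qed
    then have "?t u \<in> xH \<alpha>" by (simp add: xH_def)
    moreover have "u = \<sigma> (?t u)" using st[OF uw] by simp
    ultimately show "u \<in> \<sigma> ` xH \<alpha>" by blast
  qed
  have "int_vec \<beta> = ?B *v int_vec \<alpha> \<and> \<sigma> ` xH \<alpha> = xH \<beta>"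
    using Ba sub sup by simp
  then show ?thesis by (rule exI)
qed

end
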